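(* Let $n\ge 3$ and $\beta\in(0,1)$. Let $X,Y$ be independent random variables with $\Pr(X=i)=\Pr(Y=i)=(1-\beta)^{i-1}\beta$ for $i=1,2,\dots$, and set $L=X+Y$. Given $X,Y$, let $\pi_1,\dots,\pi_L$ be random permutations of $[n]=\{1,\dots,n\}$ such that: - $\pi_1,\dots,\pi_{L-1}$ are uniform and independent; - $\pi_L$ is uniform among the permutations with $\pi_L(i)$ odd for every $i$ with $\pi_X(i)$ even. For a player $j\in[n]$, call $j$ short if $\pi_X(j)$ is odd and long otherwise, and set $L_j=X$ if $j$ is short and $L_j=X+Y$ if $j$ is long. Fix $j\in[n]$, integers $1\le t<k$, and parities $a,b\in\{0,1\}$. Let $E$ be the event $$\{L_j=k\}\cap\{X\ge t\}\cap\{\pi_t(j)\equiv a \pmod 2\}\cap\{\pi_{t+1}(j)\equiv b\pmod 2\},$$ and assume $\Pr(E)>0$. Then $$\Pr(X=t\mid E)\le 2\beta.$$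
   Context: Interpretation: $X$ is the definitive round, and a player with input length $k$ estimates at round $t<k$ the probability that $t$ is definitive. The event $\{X\ge t\}$ is always contained in $\{L_j=k\}$ intersected with the event that the game reached round $t$. *)

theory Defs
  imports "HOL-Probability.Probability"
begin

definition uniform_perm :: "nat \<Rightarrow> (nat \<Rightarrow> nat) pmf" where
  "uniform_perm n = pmf_of_set {\<sigma>. \<sigma> permutes {1..n}}"

fun iid_list :: "nat \<Rightarrow> 'a pmf \<Rightarrow> 'a list pmf" where
  "iid_list 0 p = return_pmf []"
| "iid_list (Suc m) p = bind_pmf p (\<lambda>a. map_pmf (Cons a) (iid_list m p))"

definition last_perm :: "nat \<Rightarrow> (nat \<Rightarrow> nat) \<Rightarrow> (nat \<Rightarrow> nat) pmf" where
  "last_perm n \<tau> = pmf_of_set {\<sigma>. \<sigma> permutes {1..n} \<and> (\<forall>i\<in>{1..n}. even (\<tau> i) \<longrightarrow> odd (\<sigma> i))}"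

definition geom1 :: "real \<Rightarrow> nat pmf" where
  "geom1 \<beta> = map_pmf Suc (geometric_pmf \<beta>)"

text \<open>The joint model: outcome (x, y, ps) where ps is the list [pi_1, ..., pi_L],
  L = x + y, so pi_i = ps ! (i - 1).\<close>
definition game :: "nat \<Rightarrow> real \<Rightarrow> (nat \<times> nat \<times> (nat \<Rightarrow> nat) list) pmf" where
  "game n \<beta> =
     bind_pmf (geom1 \<beta>) (\<lambda>x.
     bind_pmf (geom1 \<beta>) (\<lambda>y.
     bind_pmf (iid_list (x + y - 1) (uniform_perm n)) (\<lambda>ps.
     map_pmf (\<lambda>\<sigma>. (x, y, ps @ [\<sigma>])) (last_perm n (ps ! (x - 1))))))"

definition perm_at :: "nat \<times> nat \<times> (nat \<Rightarrow> nat) list \<Rightarrow> nat \<Rightarrow> nat \<Rightarrow> nat" where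
  "perm_at \<omega> i = (snd (snd \<omega>)) ! (i - 1)"

definition Lj :: "nat \<Rightarrow> nat \<times> nat \<times> (nat \<Rightarrow> nat) list \<Rightarrow> nat" where
  "Lj j \<omega> = (if odd (perm_at \<omega> (fst \<omega>) j) then fst \<omega> else fst \<omega> + fst (snd \<omega>))"

definition event_E :: "nat \<Rightarrow> nat \<Rightarrow> nat \<Rightarrow> nat \<Rightarrow> nat \<Rightarrow> (nat \<times> nat \<times> (nat \<Rightarrow> nat) list) set" where
  "event_E j k t a b = {\<omega>. Lj j \<omega> = k \<and> fst \<omega> \<ge> t \<and>
      perm_at \<omega> t j mod 2 = a \<and> perm_at \<omega> (t + 1) j mod 2 = b}"

end

theory Submission
  imports Defs
begin


lemma emeasure_bind_map_Cons:
  "emeasure (map_pmf (Cons a) M) S = emeasure M (Cons a -` S)"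
  by (simp add: emeasure_distr)

lemma iid_prod_e:
  "emeasure (measure_pmf (iid_list m p)) {l. \<forall>i<m. P i (l!i)} = (\<Prod>i<m. emeasure (measure_pmf p) {x. P i x})"
proof (induction m arbitrary: P)
  case 0
  then show ?case by simp
next
  case (Suc m)
  have pre: "\<And>a. {y. \<forall>i<Suc m. P i ((a#y)!i)} = (if P 0 a then {l. \<forall>i<m. P (Suc i) (l!i)} else {})"
    by (auto simp: less_Suc_eq_0_disj)
  have "emeasure (measure_pmf (iid_list (Suc m) p)) {l. \<forall>i<Suc m. P i (l!i)}
     = (\<integral>\<^sup>+a. indicator {x. P 0 x} a * emeasure (measure_pmf (iid_list m p)) {l. \<forall>i<m. P (Suc i) (l!i)} \<partial>measure_pmf p)"
    by (simp add: emeasure_distr map_pmf_rep_eq) (rule nn_integral_cong, simp add: pre)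
  also have "\<dots> = emeasure (measure_pmf p) {x. P 0 x} * (\<Prod>i<m. emeasure (measure_pmf p) {x. P (Suc i) x})"
    using Suc.IH[of "\<lambda>i. P (Suc i)"] by (simp add: nn_integral_multc)
  also have "\<dots> = (\<Prod>i<Suc m. emeasure (measure_pmf p) {x. P i x})"
    by (simp del: prod.lessThan_Suc add: prod.lessThan_Suc_shift)
  finally show ?case .
qed



lemma iid_prod:
  "measure_pmf.prob (iid_list m p) {l. \<forall>i<m. P i (l!i)} = (\<Prod>i<m. measure_pmf.prob p {x. P i x})"
proof -
  have "ennreal (measure_pmf.prob (iid_list m p) {l. \<forall>i<m. P i (l!i)}) = ennreal (\<Prod>i<m. measure_pmf.prob p {x. P i x})"
    using iid_prod_e[of m p P] by (simp add: measure_pmf.emeasure_eq_measure prod_ennreal)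
  thus ?thesis by (subst (asm) ennreal_inj) (auto intro: prod_nonneg)
qed

lemma iid_prod_I:
  assumes "I \<subseteq> {..<m}"
  shows "measure_pmf.prob (iid_list m p) {l. \<forall>i\<in>I. Q i (l!i)} = (\<Prod>i\<in>I. measure_pmf.prob p {x. Q i x})"
proof -
  have "{l. \<forall>i\<in>I. Q i (l!i)} = {l. \<forall>i<m. (i \<in> I \<longrightarrow> Q i (l!i))}" using assms by auto
  hence "measure_pmf.prob (iid_list m p) {l. \<forall>i\<in>I. Q i (l!i)} = (\<Prod>i<m. measure_pmf.prob p {x. i \<in> I \<longrightarrow> Q i x})"
    using iid_prod[of m p "\<lambda>i x. i \<in> I \<longrightarrow> Q i x"] by simp
  also have "\<dots> = (\<Prod>i\<in>I. measure_pmf.prob p {x. i \<in> I \<longrightarrow> Q i x})"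
    by (rule prod.mono_neutral_right) (use assms in auto)
  also have "\<dots> = (\<Prod>i\<in>I. measure_pmf.prob p {x. Q i x})"
    by (rule prod.cong) auto
  finally show ?thesis .
qed

lemma set_iid: "l \<in> set_pmf (iid_list m p) \<Longrightarrow> length l = m \<and> set l \<subseteq> set_pmf p"
  by (induction m arbitrary: l) fastforce+

lemma bind_le:
  assumes "\<And>x. x \<in> set_pmf M \<Longrightarrow> measure_pmf.prob (N x) X \<le> (if C x then 1 else 0)"
  shows "measure_pmf.prob (bind_pmf M N) X \<le> measure_pmf.prob M {x. C x}"
proof -
  have "emeasure (measure_pmf (bind_pmf M N)) X = (\<integral>\<^sup>+x. emeasure (measure_pmf (N x)) X \<partial>measure_pmf M)" by simp
  also have "\<dots> \<le> (\<integral>\<^sup>+x. indicator {x. C x} x \<partial>measure_pmf M)"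
  proof (rule nn_integral_mono_AE, rule AE_pmfI)
    fix x assume "x \<in> set_pmf M"
    from assms[OF this] measure_nonneg[of "measure_pmf (N x)" X] show "emeasure (measure_pmf (N x)) X \<le> indicator {x. C x} x"
      by (cases "C x") (simp_all add: measure_pmf.emeasure_eq_measure indicator_def)
  qed
  also have "\<dots> = emeasure (measure_pmf M) {x. C x}" by simp
  finally show ?thesis by (simp add: measure_pmf.emeasure_eq_measure)
qed

lemma bind_ge:
  assumes "0 \<le> c" "\<And>x. x \<in> set_pmf M \<Longrightarrow> C x \<Longrightarrow> c \<le> measure_pmf.prob (N x) X"
  shows "c * measure_pmf.prob M {x. C x} \<le> measure_pmf.prob (bind_pmf M N) X"
proof -
  have "ennreal (c * measure_pmf.prob M {x. C x}) = (\<integral>\<^sup>+x. ennreal c * indicator {x. C x} x \<partial>measure_pmf M)"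
    using assms(1) by (simp add: nn_integral_cmult measure_pmf.emeasure_eq_measure ennreal_mult)
  also have "\<dots> \<le> (\<integral>\<^sup>+x. emeasure (measure_pmf (N x)) X \<partial>measure_pmf M)"
  proof (rule nn_integral_mono_AE, rule AE_pmfI)
    fix x assume "x \<in> set_pmf M"
    from assms(2)[OF this] show "ennreal c * indicator {x. C x} x \<le> emeasure (measure_pmf (N x)) X"
      by (auto simp: measure_pmf.emeasure_eq_measure indicator_def)
  qed
  also have "\<dots> = emeasure (measure_pmf (bind_pmf M N)) X" by simp
  finally show ?thesis by (simp add: measure_pmf.emeasure_eq_measure)
qed

lemma bind_point:
  assumes "\<And>x. x \<noteq> t \<Longrightarrow> set_pmf (N x) \<inter> X = {}"
  shows "measure_pmf.prob (bind_pmf M N) X = pmf M t * measure_pmf.prob (N t) X"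
proof -
  have "emeasure (measure_pmf (bind_pmf M N)) X = (\<integral>\<^sup>+x. emeasure (measure_pmf (N x)) X \<partial>measure_pmf M)" by simp
  also have "\<dots> = (\<integral>\<^sup>+x. ennreal (measure_pmf.prob (N t) X) * indicator {t} x \<partial>measure_pmf M)"
  proof (rule nn_integral_cong)
    fix x show "emeasure (measure_pmf (N x)) X = ennreal (measure_pmf.prob (N t) X) * indicator {t} x"
      using assms[of x] by (cases "x = t") (auto simp: measure_pmf.emeasure_eq_measure measure_pmf_zero_iff)
  qed
  also have "\<dots> = ennreal (measure_pmf.prob (N t) X) * emeasure (measure_pmf M) {t}"
    by (simp add: nn_integral_cmult)
  also have "\<dots> = ennreal (pmf M t * measure_pmf.prob (N t) X)"
    by (simp add: measure_pmf.emeasure_eq_measure measure_pmf_single ennreal_mult mult.commute)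
  finally show ?thesis by (simp add: measure_pmf.emeasure_eq_measure)
qed

lemma pmf_geom1: "0 < \<beta> \<Longrightarrow> \<beta> \<le> 1 \<Longrightarrow> i \<ge> 1 \<Longrightarrow> pmf (geom1 \<beta>) i = (1-\<beta>)^(i-1) * \<beta>"
proof -
  assume "0 < \<beta>" "\<beta> \<le> 1" "i \<ge> 1"
  then obtain m where "i = Suc m" by (cases i) auto
  thus ?thesis using \<open>0 < \<beta>\<close> \<open>\<beta> \<le> 1\<close> by (simp add: geom1_def pmf_map_inj')
qed

lemma set_geom1: "y \<in> set_pmf (geom1 \<beta>) \<Longrightarrow> y \<ge> 1"
  by (auto simp: geom1_def)



definition fl :: "nat \<Rightarrow> nat \<Rightarrow> nat" where
  "fl n v = (if v \<in> {1..n} then (if even v then v - 1 else if v < n then v + 1 else v) else v)"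

lemma fl_invol: "fl n (fl n v) = v"
  unfolding fl_def by (auto; presburger)

lemma fl_even: "v \<in> {1..n} \<Longrightarrow> even v \<Longrightarrow> odd (fl n v)"
  unfolding fl_def by (cases v) auto

lemma fl_permutes: "fl n permutes {1..n}"
  unfolding permutes_def
proof (intro conjI allI impI)
  fix x :: nat assume "x \<notin> {1..n}" thus "fl n x = x" by (auto simp: fl_def)
next
  fix y show "\<exists>!x. fl n x = y"
    by (rule ex1I[of _ "fl n y"]) (metis fl_invol)+
qed

lemma fl_permutes'[simp]: "fl n permutes {Suc 0..n}"
  using fl_permutes[of n] by simp

lemma perms_finite: "finite {\<sigma>. \<sigma> permutes {1..(n::nat)}}"
  by (rule finite_permutations[OF finite_atLeastAtMost])

lemma perms_finite'[simp]: "finite {\<sigma>. \<sigma> permutes {Suc 0..(n::nat)}}"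
  using perms_finite[of n] by simp

lemma set_uniform: "set_pmf (uniform_perm n) = {\<sigma>. \<sigma> permutes {1..n}}"
  unfolding uniform_perm_def
  by (rule set_pmf_of_set) (auto simp: perms_finite intro: permutes_id)

lemma set_last_perm:
  assumes "\<tau> permutes {1..n}"
  shows "set_pmf (last_perm n \<tau>) = {\<sigma>. \<sigma> permutes {1..n} \<and> (\<forall>i\<in>{1..n}. even (\<tau> i) \<longrightarrow> odd (\<sigma> i))}"
  unfolding last_perm_def
proof (rule set_pmf_of_set)
  show "finite {\<sigma>. \<sigma> permutes {1..n} \<and> (\<forall>i\<in>{1..n}. even (\<tau> i) \<longrightarrow> odd (\<sigma> i))}"
    by (rule finite_subset[OF _ perms_finite]) auto
  have "fl n \<circ> \<tau> \<in> {\<sigma>. \<sigma> permutes {1..n} \<and> (\<forall>i\<in>{1..n}. even (\<tau> i) \<longrightarrow> odd (\<sigma> i))}"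
    using assms fl_even permutes_in_image[OF assms] by (auto intro!: permutes_compose fl_permutes)
  thus "{\<sigma>. \<sigma> permutes {1..n} \<and> (\<forall>i\<in>{1..n}. even (\<tau> i) \<longrightarrow> odd (\<sigma> i))} \<noteq> {}" by blast
qed

lemma p1_ge:
  assumes "j \<in> {1..n}"
  shows "1/2 \<le> measure_pmf.prob (uniform_perm n) {\<sigma>. odd (\<sigma> j)}"
proof -
  define P where "P = {\<sigma>. \<sigma> permutes {1..n}}"
  define Ev where "Ev = P \<inter> {\<sigma>. even (\<sigma> j)}"
  define Od where "Od = P \<inter> {\<sigma>. odd (\<sigma> j)}"
  have fP: "finite P" unfolding P_def by (rule perms_finite)
  have neP: "P \<noteq> {}" unfolding P_def using permutes_id by blast
  have cP: "card P = card Ev + card Od"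
  proof -
    have "P = Ev \<union> Od" "Ev \<inter> Od = {}" unfolding Ev_def Od_def by auto
    thus ?thesis using fP by (simp add: card_Un_disjoint)
  qed
  have "card Ev \<le> card Od"
  proof (rule card_inj_on_le[of "\<lambda>\<sigma>. fl n \<circ> \<sigma>"])
    show "inj_on (\<lambda>\<sigma>. fl n \<circ> \<sigma>) Ev"
    proof (rule inj_onI)
      fix x y assume "fl n \<circ> x = fl n \<circ> y"
      hence "fl n \<circ> (fl n \<circ> x) = fl n \<circ> (fl n \<circ> y)" by simp
      thus "x = y" by (simp add: comp_def fl_invol fun_eq_iff)
    qed
    show "(\<lambda>\<sigma>. fl n \<circ> \<sigma>) ` Ev \<subseteq> Od"
      unfolding Ev_def Od_def P_def using assms fl_even
      by (auto intro!: permutes_compose fl_permutes dest: permutes_in_image[where x=j])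
    show "finite Od" unfolding Od_def using fP by simp
  qed
  hence "card P \<le> 2 * card Od" using cP by simp
  hence h2: "real (card P) \<le> 2 * real (card Od)" by (metis of_nat_mono of_nat_mult of_nat_numeral)
  moreover have cp0: "card P > 0" using fP neP by (simp add: card_gt_0_iff)
  moreover have pe: "measure_pmf.prob (uniform_perm n) {\<sigma>. odd (\<sigma> j)} = card Od / card P"
    unfolding uniform_perm_def Od_def P_def
    by (subst measure_pmf_of_set) (auto simp: perms_finite intro: permutes_id)
  ultimately show ?thesis by (simp add: pe divide_simps)

qed



definition inner_g :: "nat \<Rightarrow> nat \<Rightarrow> nat \<Rightarrow> (nat \<times> nat \<times> (nat \<Rightarrow> nat) list) pmf" where
  "inner_g n x y = bind_pmf (iid_list (x + y - 1) (uniform_perm n)) (\<lambda>ps.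
     map_pmf (\<lambda>\<sigma>. (x, y, ps @ [\<sigma>])) (last_perm n (ps ! (x - 1))))"

lemma game_inner: "game n \<beta> = bind_pmf (geom1 \<beta>) (\<lambda>x. bind_pmf (geom1 \<beta>) (\<lambda>y. inner_g n x y))"
  by (simp add: game_def inner_g_def)

lemma set_inner: "\<omega> \<in> set_pmf (inner_g n x y) \<Longrightarrow> fst \<omega> = x \<and> fst (snd \<omega>) = y"
  by (auto simp: inner_g_def)

lemma set_inner_x: "\<omega> \<in> set_pmf (bind_pmf (geom1 \<beta>) (inner_g n x)) \<Longrightarrow> fst \<omega> = x"
  by (auto dest: set_inner)

lemma Q1_zero:
  assumes "j \<in> {1..n}" "1 \<le> t" "t < k" "ps \<in> set_pmf (iid_list (k-1) (uniform_perm n))"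
    "\<not> ((ps!(t-1)) j mod 2 = 0 \<and> (if t+1<k then (ps!t) j mod 2 = b else b = 1))"
  shows "measure_pmf.prob (map_pmf (\<lambda>\<sigma>. (t, k-t, ps@[\<sigma>])) (last_perm n (ps!(t-1))))
           ({\<omega>. fst \<omega> = t} \<inter> event_E j k t a b) = 0"
proof -
  from set_iid[OF assms(4)] have len: "length ps = k - 1" and sp: "set ps \<subseteq> {\<sigma>. \<sigma> permutes {1..n}}"
    by (auto simp: set_uniform)
  have "ps!(t-1) \<in> set ps" using len assms(2,3) by (intro nth_mem) simp
  hence tau: "ps!(t-1) permutes {1..n}" using sp by blast
  have "\<forall>\<sigma> \<in> set_pmf (last_perm n (ps!(t-1))). (t, k-t, ps@[\<sigma>]) \<notin> {\<omega>. fst \<omega> = t} \<inter> event_E j k t a b"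
  proof
    fix \<sigma> assume "\<sigma> \<in> set_pmf (last_perm n (ps!(t-1)))"
    hence sodd: "\<forall>i\<in>{1..n}. even ((ps!(t-1)) i) \<longrightarrow> odd (\<sigma> i)" using set_last_perm[OF tau] by blast
    show "(t, k-t, ps@[\<sigma>]) \<notin> {\<omega>. fst \<omega> = t} \<inter> event_E j k t a b"
    proof
      assume inE: "(t, k-t, ps@[\<sigma>]) \<in> {\<omega>. fst \<omega> = t} \<inter> event_E j k t a b"
      have "t - 1 < k - 1" using assms(2,3) by linarith
      hence pt: "perm_at (t, k-t, ps@[\<sigma>]) t = ps!(t-1)"
        using len by (simp add: perm_at_def nth_append)
      have pt1: "perm_at (t, k-t, ps@[\<sigma>]) (t+1) = (if t+1<k then ps!t else \<sigma>)"
      proof (cases "t+1<k")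
        case True
        hence "t < length ps" using len by linarith
        thus ?thesis using True by (simp add: perm_at_def nth_append)
      next
        case False
        hence "t = length ps" using len assms(3) by linarith
        thus ?thesis using False by (simp add: perm_at_def nth_append)
      qed
      have ev: "even ((ps!(t-1)) j)"
        using inE assms(3) pt by (auto simp: event_E_def Lj_def split: if_splits)
      have b: "(if t+1<k then ps!t else \<sigma>) j mod 2 = b"
        using inE pt1 by (simp add: event_E_def)
      show False
      proof (cases "t+1<k")
        case True thus False using assms(5) ev b by simp
      next
        case False
        hence "odd (\<sigma> j)" using sodd ev assms(1) by blast
        thus False using assms(5) ev b False by presburger
      qed
    qed
  qed
  thus ?thesis by (auto simp: measure_pmf_zero_iff)
qed

lemma Q2_one:
  assumes "1 \<le> t" "t < k" "1 \<le> y" "ps \<in> set_pmf (iid_list (k+y-1) (uniform_perm n))"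
    "odd ((ps!(k-1)) j) \<and> (ps!(t-1)) j mod 2 = 0 \<and> (ps!t) j mod 2 = b"
  shows "measure_pmf.prob (map_pmf (\<lambda>\<sigma>. (k, y, ps@[\<sigma>])) (last_perm n (ps!(k-1))))
    {\<omega>. fst \<omega> = k \<and> odd (perm_at \<omega> k j) \<and> perm_at \<omega> t j mod 2 = 0 \<and> perm_at \<omega> (t+1) j mod 2 = b} = 1"
proof -
  from set_iid[OF assms(4)] have len: "length ps = k + y - 1" by simp
  have "(\<lambda>\<sigma>. (k, y, ps@[\<sigma>])) -` {\<omega>. fst \<omega> = k \<and> odd (perm_at \<omega> k j) \<and> perm_at \<omega> t j mod 2 = 0 \<and> perm_at \<omega> (t+1) j mod 2 = b} = UNIV"
    using len assms(1,2,3,5) by (auto simp: perm_at_def nth_append)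
  thus ?thesis by simp
qed



lemma prod2: "u \<noteq> v \<Longrightarrow> (\<Prod>i\<in>{u,v}. f i) = f u * (f v :: real)" by simp
lemma prod3: "u \<noteq> v \<Longrightarrow> u \<noteq> w \<Longrightarrow> v \<noteq> w \<Longrightarrow> (\<Prod>i\<in>{u,v,w}. f i) = f u * f v * (f w :: real)" by simp

lemma prod2_if: "u \<noteq> v \<Longrightarrow> (\<Prod>i\<in>{u,v}. measure_pmf.prob p {x. if i = u then P x else Q x}) = measure_pmf.prob p {x. P x} * measure_pmf.prob p {x. Q x}"
  by simp
lemma prod3_if: "u \<noteq> v \<Longrightarrow> u \<noteq> w \<Longrightarrow> v \<noteq> w \<Longrightarrow> (\<Prod>i\<in>{u,v,w}. measure_pmf.prob p {x. if i = u then P x else if i = v then Q x else R x}) = measure_pmf.prob p {x. P x} * measure_pmf.prob p {x. Q x} * measure_pmf.prob p {x. R x}"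
  by (simp add: mult.assoc)

definition pr_par :: "nat \<Rightarrow> nat \<Rightarrow> nat \<Rightarrow> real" where
  "pr_par n j c = measure_pmf.prob (uniform_perm n) {\<sigma>. \<sigma> j mod 2 = c}"
definition pr_odd :: "nat \<Rightarrow> nat \<Rightarrow> real" where
  "pr_odd n j = measure_pmf.prob (uniform_perm n) {\<sigma>. odd (\<sigma> j)}"
definition pr_b1 :: "nat \<Rightarrow> nat \<Rightarrow> nat \<Rightarrow> real" where
  "pr_b1 n j b = measure_pmf.prob (uniform_perm n) {\<sigma>. \<sigma> j mod 2 = b \<and> odd (\<sigma> j)}"

lemma Q1_le:
  assumes "j \<in> {1..n}" "1 \<le> t" "t < k"
  shows "measure_pmf.prob (inner_g n t (k-t)) ({\<omega>. fst \<omega> = t} \<inter> event_E j k t a b)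
     \<le> (if t+1<k then pr_par n j 0 * pr_par n j b else if b = 1 then pr_par n j 0 else 0)"
proof -
  have kk: "t + (k-t) - 1 = k - 1" using assms by simp
  have tne: "t - 1 \<noteq> t" using assms(2) by linarith
  have "measure_pmf.prob (inner_g n t (k-t)) ({\<omega>. fst \<omega> = t} \<inter> event_E j k t a b) \<le> measure_pmf.prob (iid_list (k-1) (uniform_perm n))
      {ps. (ps!(t-1)) j mod 2 = 0 \<and> (if t+1<k then (ps!t) j mod 2 = b else b = 1)}"
    unfolding inner_g_def kk
    apply (rule bind_le)
    subgoal for ps using Q1_zero[OF assms, of ps b a] by (auto simp: measure_pmf.prob_le_1)
    done
  also have "\<dots> = (if t+1<k then pr_par n j 0 * pr_par n j b else if b = 1 then pr_par n j 0 else 0)"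
  proof (cases "t+1<k")
    case True
    have seq: "{ps. (ps!(t-1)) j mod 2 = 0 \<and> (if t+1<k then (ps!t) j mod 2 = b else b = 1)}
        = {l. \<forall>i\<in>{t-1,t}. (if i = t-1 then (l!i) j mod 2 = 0 else (l!i) j mod 2 = b)}"
      using True assms(2) by auto
    have "measure_pmf.prob (iid_list (k-1) (uniform_perm n)) {ps. (ps!(t-1)) j mod 2 = 0 \<and> (if t+1<k then (ps!t) j mod 2 = b else b = 1)} = (\<Prod>i\<in>{t-1,t}. measure_pmf.prob (uniform_perm n) {x. if i = t-1 then x j mod 2 = 0 else x j mod 2 = b})"
      unfolding seq by (rule iid_prod_I) (use True in auto)
    also have "\<dots> = pr_par n j 0 * pr_par n j b" by (subst prod2_if[OF tne]) (simp only: pr_par_def)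
    finally have c: "measure_pmf.prob (iid_list (k-1) (uniform_perm n)) {ps. (ps!(t-1)) j mod 2 = 0 \<and> (if t+1<k then (ps!t) j mod 2 = b else b = 1)} = pr_par n j 0 * pr_par n j b" .
    show ?thesis unfolding if_P[OF True] by (rule c[unfolded if_P[OF True]])
  next
    case False
    show ?thesis
    proof (cases "b = 1")
      case True
      have seq: "{ps. (ps!(t-1)) j mod 2 = 0 \<and> (if t+1<k then (ps!t) j mod 2 = b else b = 1)}
          = {l. \<forall>i\<in>{t-1}. (l!i) j mod 2 = 0}"
        using True False by auto
      have "measure_pmf.prob (iid_list (k-1) (uniform_perm n)) {ps. (ps!(t-1)) j mod 2 = 0 \<and> (if t+1<k then (ps!t) j mod 2 = b else b = 1)} = (\<Prod>i\<in>{t-1}. measure_pmf.prob (uniform_perm n) {x. x j mod 2 = 0})"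
        unfolding seq by (rule iid_prod_I) (use assms(2,3) in auto)
      also have "\<dots> = pr_par n j 0" unfolding pr_par_def by simp
      finally have c: "measure_pmf.prob (iid_list (k-1) (uniform_perm n)) {ps. (ps!(t-1)) j mod 2 = 0 \<and> (if t+1<k then (ps!t) j mod 2 = b else b = 1)} = pr_par n j 0" .
      show ?thesis unfolding if_not_P[OF False] if_P[OF True] by (rule c[unfolded if_not_P[OF False]])
    next
      case b0: False
      have e: "{ps::(nat \<Rightarrow> nat) list. (ps!(t-1)) j mod 2 = 0 \<and> b = 1} = {}"
        using b0 by auto
      show ?thesis unfolding if_not_P[OF False] if_not_P[OF b0] e by simp
    qed
  qed
  finally show ?thesis .
qed


lemma Q2_ge:
  assumes "1 \<le> t" "t < k" "1 \<le> y"
  shows "(if t+1<k then pr_par n j 0 * pr_par n j b * pr_odd n j else pr_par n j 0 * pr_b1 n j b)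
     \<le> measure_pmf.prob (inner_g n k y) {\<omega>. fst \<omega> = k \<and> odd (perm_at \<omega> k j) \<and> perm_at \<omega> t j mod 2 = 0 \<and> perm_at \<omega> (t+1) j mod 2 = b}"
proof -
  define C2 where "C2 = {ps. odd ((ps!(k-1)) j) \<and> (ps!(t-1)) j mod 2 = 0 \<and> (ps!t) j mod 2 = b}"
  have tne: "t - 1 \<noteq> t" using assms(1) by linarith
  have eq: "measure_pmf.prob (iid_list (k+y-1) (uniform_perm n)) C2 = (if t+1<k then pr_par n j 0 * pr_par n j b * pr_odd n j else pr_par n j 0 * pr_b1 n j b)"
  proof (cases "t+1<k")
    case True
    have kne: "t - 1 \<noteq> k - 1" "t \<noteq> k - 1" using True assms(1) by linarith+
    have seq: "C2 = {l. \<forall>i\<in>{t-1,t,k-1}. (if i = t-1 then (l!i) j mod 2 = 0 else if i = t then (l!i) j mod 2 = b else odd ((l!i) j))}"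
      unfolding C2_def using True assms(1) by auto
    have "measure_pmf.prob (iid_list (k+y-1) (uniform_perm n)) C2 = (\<Prod>i\<in>{t-1,t,k-1}. measure_pmf.prob (uniform_perm n) {x. if i = t-1 then x j mod 2 = 0 else if i = t then x j mod 2 = b else odd (x j)})"
      unfolding seq by (rule iid_prod_I) (use True assms(3) in auto)
    also have "\<dots> = pr_par n j 0 * pr_par n j b * pr_odd n j"
      by (subst prod3_if[OF tne kne]) (simp only: pr_par_def pr_odd_def)
    finally show ?thesis unfolding if_P[OF True] .
  next
    case False
    hence kt: "k - 1 = t" using assms(2) by linarith
    have seq: "C2 = {l. \<forall>i\<in>{t-1,t}. (if i = t-1 then (l!i) j mod 2 = 0 else (l!i) j mod 2 = b \<and> odd ((l!i) j))}"
      unfolding C2_def kt using assms(1) by auto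
    have "measure_pmf.prob (iid_list (k+y-1) (uniform_perm n)) C2 = (\<Prod>i\<in>{t-1,t}. measure_pmf.prob (uniform_perm n) {x. if i = t-1 then x j mod 2 = 0 else x j mod 2 = b \<and> odd (x j)})"
      unfolding seq by (rule iid_prod_I) (use kt assms(2,3) in auto)
    also have "\<dots> = pr_par n j 0 * pr_b1 n j b"
      by (subst prod2_if[OF tne]) (simp only: pr_par_def pr_b1_def)
    finally show ?thesis unfolding if_not_P[OF False] .
  qed
  have "1 * measure_pmf.prob (iid_list (k+y-1) (uniform_perm n)) {ps. ps \<in> C2} \<le> measure_pmf.prob (inner_g n k y) {\<omega>. fst \<omega> = k \<and> odd (perm_at \<omega> k j) \<and> perm_at \<omega> t j mod 2 = 0 \<and> perm_at \<omega> (t+1) j mod 2 = b}"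
    unfolding inner_g_def
    apply (rule bind_ge)
     apply simp
    subgoal for ps using Q2_one[OF assms, of ps n j b] unfolding C2_def by simp
    done
  hence le: "measure_pmf.prob (iid_list (k+y-1) (uniform_perm n)) C2 \<le> measure_pmf.prob (inner_g n k y) {\<omega>. fst \<omega> = k \<and> odd (perm_at \<omega> k j) \<and> perm_at \<omega> t j mod 2 = 0 \<and> perm_at \<omega> (t+1) j mod 2 = b}"
    by simp
  show ?thesis using le unfolding eq .
qed

lemma final_arith:
  fixes \<beta> W Z P1 PB PE :: real
  assumes "0 < \<beta>" "\<beta> < 1" "0 \<le> W" "0 \<le> Z" "P1 \<le> \<beta>^2 * W * Z" "\<beta> * (1-\<beta>) * W * Z / 2 \<le> PB"
    "P1 + PB \<le> PE" "0 \<le> P1" "0 < PE"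
  shows "P1 / PE \<le> 2 * \<beta>"
proof -
  have "P1 \<le> 2 * \<beta> * PE"
  proof (cases "1 \<le> 2 * \<beta>")
    case True
    have "0 \<le> \<beta> * (1-\<beta>) * W * Z / 2" using assms(1-4) by simp
    hence "0 \<le> PB" using assms(6) by linarith
    hence "P1 \<le> PE" using assms(7) by linarith
    also have "\<dots> \<le> 2 * \<beta> * PE" using True assms(9) by (simp add: mult_right_mono[of 1 "2*\<beta>" PE, simplified])
    finally show ?thesis .
  next
    case False
    have "(1 - 2*\<beta>) * P1 \<le> (1 - 2*\<beta>) * (\<beta>^2 * W * Z)"
      using False assms(5) by (intro mult_left_mono) auto
    also have "\<dots> \<le> (1 - \<beta>) * (\<beta>^2 * W * Z)"
      using assms by (intro mult_right_mono) auto
    also have "\<dots> = 2 * \<beta> * (\<beta> * (1-\<beta>) * W * Z / 2)" by (simp add: power2_eq_square)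
    also have "\<dots> \<le> 2 * \<beta> * PB" using assms by (intro mult_left_mono) auto
    finally have "(1 - 2*\<beta>) * P1 \<le> 2 * \<beta> * PB" .
    moreover have "2*\<beta>*(P1+PB) \<le> 2*\<beta>*PE" using assms(7) assms(1) by (intro mult_left_mono) auto
    moreover have "2*\<beta>*(P1+PB) = 2*\<beta>*P1 + 2*\<beta>*PB" "(1-2*\<beta>)*P1 = P1 - 2*\<beta>*P1"
      by (simp_all add: algebra_simps)
    ultimately show ?thesis by linarith
  qed
  thus ?thesis using assms(9) by (simp add: divide_simps mult.commute)
qed


theorem lemma3:
  fixes n j k t a b :: nat and \<beta> :: real
  assumes "n \<ge> 3" and "0 < \<beta>" and "\<beta> < 1"
    and "j \<in> {1..n}" and "1 \<le> t" and "t < k"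
    and "a \<in> {0, 1}" and "b \<in> {0, 1}"
    and "measure_pmf.prob (game n \<beta>) (event_E j k t a b) > 0"
  shows "measure_pmf.prob (game n \<beta>) ({\<omega>. fst \<omega> = t} \<inter> event_E j k t a b)
           / measure_pmf.prob (game n \<beta>) (event_E j k t a b) \<le> 2 * \<beta>"
proof (cases "a = 0")
  case False
  have e: "{\<omega>. fst \<omega> = t} \<inter> event_E j k t a b = {}" using False assms(6,7)
    by (auto simp: event_E_def Lj_def split: if_splits)
  show ?thesis unfolding e using assms(2) by simp
next
  case True
  define EA where "EA = {\<omega>. fst \<omega> = t} \<inter> event_E j k t a b"
  define E where "E = event_E j k t a b"
  define G where "G = game n \<beta>"
  define g where "g = geom1 \<beta>"
  define Z where "Z = (if t+1<k then pr_par n j 0 * pr_par n j b else if b = 1 then pr_par n j 0 else 0)"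
  define Q2 where "Q2 = (if t+1<k then pr_par n j 0 * pr_par n j b * pr_odd n j else pr_par n j 0 * pr_b1 n j b)"
  define B where "B = {\<omega>. fst \<omega> = k \<and> odd (perm_at \<omega> k j) \<and> perm_at \<omega> t j mod 2 = 0 \<and> perm_at \<omega> (t+1) j mod 2 = b}"
  have Z0: "0 \<le> Z" unfolding Z_def pr_par_def by simp
  have Q20: "0 \<le> Q2" unfolding Q2_def pr_par_def pr_odd_def pr_b1_def by simp
  have p1h: "1/2 \<le> pr_odd n j" unfolding pr_odd_def by (rule p1_ge[OF assms(4)])
  have Zp1: "Z * pr_odd n j \<le> Q2"
  proof (cases "t+1<k")
    case True thus ?thesis unfolding Z_def Q2_def by simp
  next
    case False
    show ?thesis
    proof (cases "b = 1")
      case True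
      have se: "{\<sigma>::nat\<Rightarrow>nat. \<sigma> j mod 2 = 1 \<and> odd (\<sigma> j)} = {\<sigma>. odd (\<sigma> j)}" by (simp add: odd_iff_mod_2_eq_one)
      have "pr_b1 n j b = pr_odd n j" unfolding pr_b1_def pr_odd_def True se ..
      thus ?thesis unfolding Z_def Q2_def if_not_P[OF False] if_P[OF True] by simp
    next
      case b0: False
      show ?thesis using Q20 unfolding Z_def if_not_P[OF False] if_not_P[OF b0] by simp
    qed
  qed

  have P1eq: "measure_pmf.prob G EA = pmf g t * (pmf g (k-t) * measure_pmf.prob (inner_g n t (k-t)) EA)"
  proof -
    have "measure_pmf.prob G EA = pmf g t * measure_pmf.prob (bind_pmf g (inner_g n t)) EA"
      unfolding G_def g_def game_inner by (rule bind_point) (auto simp: EA_def dest!: set_inner)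
    also have "measure_pmf.prob (bind_pmf g (inner_g n t)) EA = pmf g (k-t) * measure_pmf.prob (inner_g n t (k-t)) EA"
      by (rule bind_point) (use assms(6) in \<open>auto simp: EA_def event_E_def Lj_def dest!: set_inner split: if_splits\<close>)
    finally show ?thesis .
  qed
  have Q1le: "measure_pmf.prob (inner_g n t (k-t)) EA \<le> Z"
    unfolding EA_def Z_def by (rule Q1_le[OF assms(4,5,6)])

  have PB1: "measure_pmf.prob G B = pmf g k * measure_pmf.prob (bind_pmf g (inner_g n k)) B"
    unfolding G_def g_def game_inner by (rule bind_point) (auto simp: B_def dest!: set_inner)
  have PB2: "Q2 \<le> measure_pmf.prob (bind_pmf g (inner_g n k)) B"
  proof -
    have "Q2 * measure_pmf.prob g {y. True} \<le> measure_pmf.prob (bind_pmf g (inner_g n k)) B"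
    proof (rule bind_ge[OF Q20])
      fix y assume "y \<in> set_pmf g"
      hence y1: "1 \<le> y" unfolding g_def by (rule set_geom1)
      show "Q2 \<le> measure_pmf.prob (inner_g n k y) B"
        unfolding Q2_def B_def by (rule Q2_ge[OF assms(5,6) y1])
    qed
    thus ?thesis by simp
  qed

  have disj: "EA \<inter> B = {}" unfolding EA_def B_def using assms(6) by auto
  have sub: "EA \<union> B \<subseteq> E" unfolding EA_def B_def E_def
    using assms(6) True by (auto simp: event_E_def Lj_def)
  have sumle: "measure_pmf.prob G EA + measure_pmf.prob G B \<le> measure_pmf.prob G E"
  proof -
    have "measure_pmf.prob G EA + measure_pmf.prob G B = measure_pmf.prob G (EA \<union> B)"
      using disj by (simp add: measure_pmf.finite_measure_Union)
    also have "\<dots> \<le> measure_pmf.prob G E" using sub by (rule measure_pmf.finite_measure_mono) simp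
    finally show ?thesis .
  qed

  define W where "W = (1 - \<beta>) ^ (k - 2)"
  have W0: "0 \<le> W" unfolding W_def using assms(3) by simp
  have gt: "pmf g t = (1-\<beta>)^(t-1) * \<beta>" unfolding g_def using assms by (intro pmf_geom1) auto
  have gkt: "pmf g (k-t) = (1-\<beta>)^(k-t-1) * \<beta>" unfolding g_def using assms by (intro pmf_geom1) auto
  have gk: "pmf g k = (1-\<beta>)^(k-1) * \<beta>" unfolding g_def using assms by (intro pmf_geom1) auto
  have ww: "(1-\<beta>)^(t-1) * (1-\<beta>)^(k-t-1) = W"
  proof -
    have "t - 1 + (k - t - 1) = k - 2" using assms(5,6) by linarith
    thus ?thesis unfolding W_def by (metis power_add)
  qed
  have gtt: "pmf g t * pmf g (k-t) = \<beta>^2 * W" unfolding gt gkt ww[symmetric] by (simp add: power2_eq_square algebra_simps)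
  have "(1-\<beta>)^(k-1) = (1-\<beta>) * W"
  proof -
    have "k - 1 = Suc (k - 2)" using assms(5,6) by linarith
    thus ?thesis unfolding W_def by simp
  qed
  hence gk': "pmf g k = \<beta> * (1-\<beta>) * W" unfolding gk by simp

  have P1le: "measure_pmf.prob G EA \<le> \<beta>^2 * W * Z"
  proof -
    have "measure_pmf.prob G EA = (pmf g t * pmf g (k-t)) * measure_pmf.prob (inner_g n t (k-t)) EA"
      using P1eq by simp
    also have "\<dots> \<le> (pmf g t * pmf g (k-t)) * Z" by (intro mult_left_mono Q1le) simp
    finally show ?thesis unfolding gtt by simp
  qed
  have PBge: "\<beta> * (1-\<beta>) * W * Z / 2 \<le> measure_pmf.prob G B"
  proof -
    have c0: "0 \<le> \<beta> * (1-\<beta>) * W" using assms(2,3) W0 by simp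
    have "\<beta> * (1-\<beta>) * W * Z / 2 = (\<beta> * (1-\<beta>) * W) * (Z * (1/2))" by simp
    also have "\<dots> \<le> (\<beta> * (1-\<beta>) * W) * (Z * pr_odd n j)"
      by (intro mult_left_mono c0 p1h Z0)
    also have "\<dots> \<le> (\<beta> * (1-\<beta>) * W) * Q2" by (intro mult_left_mono c0 Zp1)
    also have "\<dots> \<le> (\<beta> * (1-\<beta>) * W) * measure_pmf.prob (bind_pmf g (inner_g n k)) B"
      by (intro mult_left_mono c0 PB2)
    also have "\<dots> = measure_pmf.prob G B" unfolding PB1 gk' by simp
    finally show ?thesis .
  qed
  have "measure_pmf.prob G EA / measure_pmf.prob G E \<le> 2 * \<beta>"
    by (rule final_arith[OF assms(2,3) W0 Z0 P1le PBge sumle measure_nonneg]) (use assms(9) in \<open>simp add: E_def G_def\<close>)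
  thus ?thesis unfolding EA_def E_def G_def .
qed


end
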